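(* Let $\hat{r}^{\mathsf{mom}}_n$ be the median-of-means estimate of the regression function $r$ constructed on $m$ blocks with an arbitrary base estimate $\hat{r}_N$. Then for all $x\in\mathbb{R}^d$ and all $t\geq 0$, \[ \mathbb{P}\left(\left|\hat{r}^{\mathsf{mom}}_n(x)-r(x)\right|\geq t\right)\leq 2^m\, p_t(x)^{m/2}, \qquad\text{where } p_t(x):=\mathbb{P}\left(\left|\hat{r}_N(x)-r(x)\right|\geq t\right), \] and $\hat{r}_N(x)=\hat{r}_N(x,\mathcal{D}_N)$ denotes the base estimate computed on an i.i.d. sample $\mathcal{D}_N$ of size $N$ with the law of $(X,Y)$.
   Context: Let $(X,Y)$ be a random pair with $X\in\mathbb{R}^d$ ($d\geq1$) of law $\mu$ and $Y$ real-valued with $\mathbb{E}[Y^2]<\infty$; the regression function is $r(x)=\mathbb{E}[Y\mid X=x]$. Let $\mathcal{D}_n=((X_1,Y_1),\dots,(X_n,Y_n))$ be i.i.d. copies of $(X,Y)$. For $m\in\{1,\dots,n\}$, let $N=\lfloor n/m\rfloor$ and let $\mathcal{D}^{(1)},\dots,\mathcal{D}^{(m)}$ be $m$ disjoint subsets of $\mathcal{D}_n$, each consisting of $N$ observations (remaining observations are discarded). A base estimate is a map $\hat{r}_N(x,\cdot)$ taking a sample of size $N$ and returning a real number; set $\hat{r}^{(j)}(x)=\hat{r}_N(x,\mathcal{D}^{(j)})$. The median-of-means estimate is $\hat{r}^{\mathsf{mom}}_n(x)=\mathsf{median}(\hat{r}^{(1)}(x),\dots,\hat{r}^{(m)}(x))$,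 where $\mathsf{median}(r_1,\dots,r_m)=r_{(\lceil m/2\rceil)}$ is the $\lceil m/2\rceil$-th smallest of the values. *)

theory Defs
  imports "HOL-Probability.Probability"
begin

text \<open>median(r_1,...,r_m) = the ceil(m/2)-th smallest value (1-based).
  Note ceil(m/2) = (m+1) div 2 for natural m.\<close>
definition median_list :: "real list \<Rightarrow> real" where
  "median_list rs = sort rs ! ((length rs + 1) div 2 - 1)"

text \<open>Median-of-means estimate at x on outcome \<omega>: block j consists of the
  observations Dn (\<sigma> j 0), ..., Dn (\<sigma> j (N-1)), N = n div m.\<close>
definition mom_estimate ::
  "('d \<Rightarrow> (nat \<Rightarrow> 'z) \<Rightarrow> real) \<Rightarrow> nat \<Rightarrow> nat \<Rightarrow> (nat \<Rightarrow> nat \<Rightarrow> nat)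
     \<Rightarrow> (nat \<Rightarrow> 'a \<Rightarrow> 'z) \<Rightarrow> 'd \<Rightarrow> 'a \<Rightarrow> real" where
  "mom_estimate est n m \<sigma> Dn x \<omega> =
     median_list (map (\<lambda>j. est x (restrict (\<lambda>i. Dn (\<sigma> j i) \<omega>) {..<n div m})) [0..<m])"

end

theory Submission
  imports Defs
begin

lemma median_count:
  fixes rs :: "real list" and a t :: real
  assumes ne: "rs \<noteq> []" and h: "t \<le> \<bar>median_list rs - a\<bar>"
  shows "(length rs + 1) div 2 \<le> length (filter (\<lambda>v. t \<le> \<bar>v - a\<bar>) rs)"
proof -
  define xs where "xs = sort rs"
  define L where "L = length rs"
  define k where "k = (L + 1) div 2"
  let ?P = "\<lambda>v. t \<le> \<bar>v - a\<bar>"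
  have lx: "length xs = L" by (simp add: xs_def L_def)
  have sx: "sorted xs" by (simp add: xs_def)
  have k1: "1 \<le> k" "k \<le> L" "2 * k \<le> L + 1" using ne by (cases rs, auto simp: k_def L_def)+
  have med: "median_list rs = xs ! (k - 1)" by (simp add: median_list_def xs_def k_def L_def)
  have "length (filter ?P rs) = length (filter ?P xs)"
    unfolding xs_def filter_sort by simp
  also have "\<dots> = card {i. i < L \<and> ?P (xs ! i)}" by (simp add: length_filter_conv_card lx)
  finally have eq: "length (filter ?P rs) = card {i. i < L \<and> ?P (xs ! i)}" .
  show ?thesis
  proof (cases "a + t \<le> median_list rs")
    case True
    have "{k - 1..<L} \<subseteq> {i. i < L \<and> ?P (xs ! i)}"
    proof
      fix i assume i: "i \<in> {k - 1..<L}"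
      have "xs ! (k - 1) \<le> xs ! i" using sx i lx by (intro sorted_nth_mono) auto
      then show "i \<in> {i. i < L \<and> ?P (xs ! i)}" using i True med by auto
    qed
    then have "card {k - 1..<L} \<le> card {i. i < L \<and> ?P (xs ! i)}"
      by (intro card_mono) auto
    then show ?thesis using eq k1 unfolding k_def L_def by simp
  next
    case False
    then have F: "median_list rs \<le> a - t" using h by linarith
    have "{..<k} \<subseteq> {i. i < L \<and> ?P (xs ! i)}"
    proof
      fix i assume i: "i \<in> {..<k}"
      have "xs ! i \<le> xs ! (k - 1)" using sx i lx k1 by (intro sorted_nth_mono) auto
      then show "i \<in> {i. i < L \<and> ?P (xs ! i)}" using i F med k1 by auto
    qed
    then have "card {..<k} \<le> card {i. i < L \<and> ?P (xs ! i)}"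
      by (intro card_mono) auto
    then show ?thesis using eq k1 unfolding k_def L_def by simp
  qed
qed
theorem lemma2p1:
  fixes M :: "'a measure"
    and X :: "'a \<Rightarrow> 'd::euclidean_space" and Y :: "'a \<Rightarrow> real"
    and r :: "'d \<Rightarrow> real"
    and Dn :: "nat \<Rightarrow> 'a \<Rightarrow> 'd \<times> real"
    and est :: "'d \<Rightarrow> (nat \<Rightarrow> 'd \<times> real) \<Rightarrow> real"
    and n m :: nat and \<sigma> :: "nat \<Rightarrow> nat \<Rightarrow> nat"
    and x :: 'd and t :: real
  assumes "prob_space M"
    and "X \<in> borel_measurable M" and "Y \<in> borel_measurable M"
    and "integrable M (\<lambda>\<omega>. (Y \<omega>)\<^sup>2)"
    and "r \<in> borel_measurable borel"
    and "AE \<omega> in M. r (X \<omega>) = real_cond_exp M (vimage_algebra (space M) X borel) Y \<omega>"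
    and "\<And>i. i < n \<Longrightarrow> Dn i \<in> borel_measurable M"
    and "prob_space.indep_vars M (\<lambda>_. borel) Dn {..<n}"
    and "\<And>i. i < n \<Longrightarrow> distr M borel (Dn i) = distr M borel (\<lambda>\<omega>. (X \<omega>, Y \<omega>))"
    and "1 \<le> m" and "m \<le> n"
    and "\<And>j i. j < m \<Longrightarrow> i < n div m \<Longrightarrow> \<sigma> j i < n"
    and "inj_on (\<lambda>(j, i). \<sigma> j i) ({..<m} \<times> {..<n div m})"
    and "\<And>z. (\<lambda>D. est z D) \<in> borel_measurable
               (PiM {..<n div m} (\<lambda>_. distr M borel (\<lambda>\<omega>. (X \<omega>, Y \<omega>))))"
    and "0 \<le> t"
  shows "measure M {\<omega> \<in> space M. \<bar>mom_estimate est n m \<sigma> Dn x \<omega> - r x\<bar> \<ge> t}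
     \<le> 2 ^ m * (measure (PiM {..<n div m} (\<lambda>_. distr M borel (\<lambda>\<omega>. (X \<omega>, Y \<omega>))))
                  {D \<in> space (PiM {..<n div m} (\<lambda>_. distr M borel (\<lambda>\<omega>. (X \<omega>, Y \<omega>)))).
                     \<bar>est x D - r x\<bar> \<ge> t}) powr (real m / 2)"
  proof -
  interpret prob_space M by fact
  define N where "N = n div m"
  define P where "P = distr M borel (\<lambda>\<omega>. (X \<omega>, Y \<omega>))"
  define Bl where "Bl j \<omega> = restrict (\<lambda>i. Dn (\<sigma> j i) \<omega>) {..<N}" for j \<omega>
  define bad where "bad D \<longleftrightarrow> t \<le> \<bar>est x D - r x\<bar>" for D
  define B where "B j = {\<omega> \<in> space M. bad (Bl j \<omega>)}" for j
  define Q where "Q = PiM {..<N} (\<lambda>_. P)"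
  define p where "p = measure Q {D \<in> space Q. bad D}"
  define k where "k = (m + 1) div 2"
  have PP: "prob_space P" unfolding P_def
    by (intro prob_space_distr) (use assms(2,3) in measurable)
  have sP: "sets P = sets borel" by (simp add: P_def)
  have sQ: "sets Q = sets (PiM {..<N} (\<lambda>_. borel))"
    unfolding Q_def by (intro sets_PiM_cong) (auto simp: sP)
  have QP: "prob_space Q" unfolding Q_def using PP by (intro prob_space_PiM) auto
  have estm: "est x \<in> borel_measurable (PiM {..<N} (\<lambda>_. borel))"
    using assms(14)[of x] measurable_cong_sets[OF sQ refl] by (simp add: Q_def P_def N_def)
  have badm: "{D \<in> space (PiM {..<N} (\<lambda>_. borel)). bad D} \<in> sets (PiM {..<N} (\<lambda>_. borel))"
    unfolding bad_def using estm by measurable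
  have Blm: "Bl j \<in> measurable M (PiM {..<N} (\<lambda>_. borel))" if "j < m" for j
    unfolding Bl_def using that assms(7,12) by (intro measurable_restrict) (auto simp: N_def)
  have Bev: "B j \<in> events" if "j < m" for j
  proof -
    have "B j = Bl j -` {D \<in> space (PiM {..<N} (\<lambda>_. borel)). bad D} \<inter> space M"
      using measurable_space[OF Blm[OF that]] by (auto simp: B_def)
    then show ?thesis using Blm[OF that] badm by (auto intro: measurable_sets)
  qed
  define Dn' where "Dn' i = (if i < n then Dn i else (\<lambda>_. (0, 0)))" for i
  define F where "F = (\<lambda>\<omega>. \<lambda>i\<in>{..<n}. Dn' i \<omega>)"
  have Dn'm: "random_variable borel (Dn' i)" for i
    using assms(7) by (auto simp: Dn'_def)
  have ind': "indep_vars (\<lambda>_. borel) Dn' {..<n}"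
    using assms(8) indep_vars_cong[of "{..<n}" "{..<n}" Dn Dn' "\<lambda>_. borel" "\<lambda>_. borel"] by (auto simp: Dn'_def)
  have n0: "{..<n} \<noteq> {}" using assms(10,11) lessThan_empty_iff by (metis le_zero_eq not_one_le_zero)
  have distF: "distr M (PiM {..<n} (\<lambda>_. borel)) F = PiM {..<n} (\<lambda>_. P)"
  proof -
    have "distr M (PiM {..<n} (\<lambda>_. borel)) F = PiM {..<n} (\<lambda>i. distr M borel (Dn' i))"
      using ind' indep_vars_iff_distr_eq_PiM[where M'="\<lambda>_. borel" and X=Dn' and I="{..<n}", OF n0 Dn'm] by (simp add: F_def)
    also have "\<dots> = PiM {..<n} (\<lambda>_. P)"
      by (intro PiM_cong) (auto simp: Dn'_def P_def assms(9))
    finally show ?thesis .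
  qed
  have Fm: "F \<in> measurable M (PiM {..<n} (\<lambda>_. borel))"
    unfolding F_def using Dn'm by (intro measurable_restrict) auto
  have distBl: "distr M (PiM {..<N} (\<lambda>_. borel)) (Bl j) = Q" if j: "j < m" for j
  proof -
    define g where "g = (\<lambda>f :: nat \<Rightarrow> 'd \<times> real. \<lambda>i\<in>{..<N}. f (\<sigma> j i))"
    have inj: "inj_on (\<sigma> j) {..<N}"
      using assms(13) j unfolding inj_on_def N_def by auto
    have fI: "\<sigma> j \<in> {..<N} \<rightarrow> {..<n}" using assms(12) j by (auto simp: N_def)
    have gm: "g \<in> measurable (PiM {..<n} (\<lambda>_. borel)) (PiM {..<N} (\<lambda>_. borel))"
      unfolding g_def using fI by (intro measurable_restrict measurable_component_singleton) auto
    have "distr M (PiM {..<N} (\<lambda>_. borel)) (Bl j) = distr M (PiM {..<N} (\<lambda>_. borel)) (g \<circ> F)"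
      using fI by (intro distr_cong) (auto simp: Bl_def g_def F_def Dn'_def fun_eq_iff)
    also have "\<dots> = distr (distr M (PiM {..<n} (\<lambda>_. borel)) F) (PiM {..<N} (\<lambda>_. borel)) g"
      by (rule distr_distr[symmetric, OF gm Fm])
    also have "\<dots> = distr (PiM {..<n} (\<lambda>_. P)) (PiM {..<N} (\<lambda>i. P)) g"
      by (intro distr_cong) (auto simp: distF sQ[unfolded Q_def, symmetric])
    also have "\<dots> = Q"
      using distr_PiM_reindex[of "{..<n}" "\<lambda>_. P" "\<sigma> j" "{..<N}", OF _ inj fI] PP
      by (simp add: Q_def g_def)
    finally show ?thesis .
  qed
  have probB: "prob (B j) = p" if j: "j < m" for j
  proof -
    have "prob (B j) = measure (distr M (PiM {..<N} (\<lambda>_. borel)) (Bl j)) {D \<in> space (PiM {..<N} (\<lambda>_. borel)). bad D}"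
      using Blm[OF j] badm measurable_space[OF Blm[OF j]]
      by (subst measure_distr) (auto simp: B_def intro!: arg_cong[where f=prob])
    also have "\<dots> = p" using distBl[OF j] sets_eq_imp_space_eq[OF sQ] by (simp add: p_def)
    finally show ?thesis .
  qed
  define K where "K j = \<sigma> j ` {..<N}" for j
  have indK: "indep_vars (\<lambda>j. PiM (K j) (\<lambda>_. borel)) (\<lambda>j \<omega>. restrict (\<lambda>i. Dn i \<omega>) (K j)) {..<m}"
  proof (rule indep_vars_restrict[OF assms(8)])
    show "K j \<subseteq> {..<n}" if "j \<in> {..<m}" for j using assms(12) that by (auto simp: K_def N_def)
    show "disjoint_family_on K {..<m}"
      using assms(13) unfolding disjoint_family_on_def K_def inj_on_def N_def by fastforce
  qed
  have indBl: "indep_vars (\<lambda>_. PiM {..<N} (\<lambda>_. borel)) Bl {..<m}"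
  proof -
    have "indep_vars (\<lambda>_. PiM {..<N} (\<lambda>_. borel))
       (\<lambda>j \<omega>. (\<lambda>f. \<lambda>i\<in>{..<N}. f (\<sigma> j i)) (restrict (\<lambda>i. Dn i \<omega>) (K j))) {..<m}"
      by (rule indep_vars_compose2[OF indK])
         (unfold K_def, intro measurable_restrict measurable_component_singleton, auto)
    moreover have "(\<lambda>f. \<lambda>i\<in>{..<N}. f (\<sigma> j i)) (restrict (\<lambda>i. Dn i \<omega>) (K j)) = Bl j \<omega>" for j \<omega>
      by (auto simp: Bl_def K_def fun_eq_iff)
    ultimately show ?thesis by simp
  qed
  have indB: "indep_events B {..<m}"
    unfolding B_def by (rule indep_eventsI_indep_vars[OF indBl]) (use badm in auto)
  have probInt: "prob (\<Inter>j\<in>S. B j) = p ^ card S" if "S \<subseteq> {..<m}" "S \<noteq> {}" for S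
  proof -
    have "prob (\<Inter>j\<in>S. B j) = (\<Prod>j\<in>S. prob (B j))"
      using indB that finite_subset[OF that(1)] unfolding indep_events_def by auto
    also have "\<dots> = p ^ card S" using that probB by (simp add: subset_eq)
    finally show ?thesis .
  qed
  define SS where "SS = {S. S \<subseteq> {..<m} \<and> card S = k}"
  have k1: "1 \<le> k" "k \<le> m" using assms(10) by (auto simp: k_def)
  define E where "E = {\<omega> \<in> space M. \<bar>mom_estimate est n m \<sigma> Dn x \<omega> - r x\<bar> \<ge> t}"
  have sub: "E \<subseteq> (\<Union>S\<in>SS. \<Inter>j\<in>S. B j)"
  proof
    fix \<omega> assume w: "\<omega> \<in> E"
    define rs where "rs = map (\<lambda>j. est x (Bl j \<omega>)) [0..<m]"
    have "mom_estimate est n m \<sigma> Dn x \<omega> = median_list rs"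
      by (simp add: mom_estimate_def rs_def Bl_def N_def)
    then have "k \<le> length (filter (\<lambda>v. t \<le> \<bar>v - r x\<bar>) rs)"
      using median_count[of rs t "r x"] w assms(10) by (auto simp: E_def rs_def k_def)
    also have "\<dots> = card {j. j < m \<and> bad (Bl j \<omega>)}"
      unfolding length_filter_conv_card rs_def bad_def
      by (intro arg_cong[where f=card] Collect_cong) (auto simp del: upt_Suc)
    finally obtain S where S: "S \<subseteq> {j. j < m \<and> bad (Bl j \<omega>)}" "card S = k"
      by (meson obtain_subset_with_card_n)
    have "S \<in> SS" using S by (auto simp: SS_def)
    moreover have "\<omega> \<in> (\<Inter>j\<in>S. B j)" using S w by (auto simp: B_def E_def)
    ultimately show "\<omega> \<in> (\<Union>S\<in>SS. \<Inter>j\<in>S. B j)" by blast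
  qed
  have finSS: "finite SS" by (simp add: SS_def)
  have SSne: "S \<subseteq> {..<m} \<and> S \<noteq> {}" if "S \<in> SS" for S
    using that k1 by (auto simp: SS_def)
  have Sev: "(\<lambda>S. \<Inter>j\<in>S. B j) ` SS \<subseteq> events"
  proof safe
    fix S assume "S \<in> SS"
    then have "S \<subseteq> {..<m}" "S \<noteq> {}" using SSne by auto
    then show "(\<Inter>j\<in>S. B j) \<in> events"
      using Bev finite_subset[of S "{..<m}"] by (intro sets.finite_INT) auto
  qed
  have p01: "0 \<le> p" "p \<le> 1" using QP by (auto simp: p_def prob_space.prob_le_1)
  have "prob E \<le> prob (\<Union>S\<in>SS. \<Inter>j\<in>S. B j)"
  proof (cases "E \<in> events")
    case True
    then show ?thesis using sub Sev finSS by (intro finite_measure_mono) auto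
  next
    case False
    then show ?thesis by (simp add: measure_notin_sets)
  qed
  also have "\<dots> \<le> (\<Sum>S\<in>SS. prob (\<Inter>j\<in>S. B j))"
    by (rule finite_measure_subadditive_finite[OF finSS Sev])
  also have "\<dots> = (\<Sum>S\<in>SS. p ^ k)"
    using SSne probInt by (intro sum.cong) (auto simp: SS_def)
  also have "\<dots> = real (m choose k) * p ^ k"
    by (simp add: SS_def n_subsets)
  also have "\<dots> \<le> 2 ^ m * p powr (real m / 2)"
  proof (rule mult_mono)
    show "real (m choose k) \<le> 2 ^ m"
      using binomial_le_pow2[of m k] by (metis of_nat_le_iff of_nat_numeral of_nat_power)
    show "p ^ k \<le> p powr (real m / 2)"
    proof (cases "p = 0")
      case True then show ?thesis using k1 by (simp add: power_0_left)
    next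
      case False
      then have "p ^ k = p powr real k" using p01 by (simp add: powr_realpow)
      also have "\<dots> \<le> p powr (real m / 2)"
        using p01 by (intro powr_mono') (auto simp: k_def)
      finally show ?thesis .
    qed
  qed (use p01 in auto)
  finally have fin: "prob E \<le> 2 ^ m * p powr (real m / 2)" .
  have pe: "p = measure (PiM {..<n div m} (\<lambda>_. distr M borel (\<lambda>\<omega>. (X \<omega>, Y \<omega>))))
                  {D \<in> space (PiM {..<n div m} (\<lambda>_. distr M borel (\<lambda>\<omega>. (X \<omega>, Y \<omega>)))).
                     \<bar>est x D - r x\<bar> \<ge> t}"
    unfolding p_def Q_def P_def N_def bad_def by (rule refl)
  show ?thesis using fin unfolding pe E_def by (rule ord_le_eq_trans) (rule refl)
qed

end
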